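(* For each critical poset $\mathcal S$ and each pair $\lambda\neq\mu$ of complex numbers, the subspace representations $\mathcal V_\lambda(\mathcal S)$ and $\mathcal V_\mu(\mathcal S)$ are not equivalent. Moreover, for each critical poset $\mathcal S$, the subspace representation $\mathcal V(\mathcal S_a)$ is schurian.
   Context: A subspace representation of a finite poset $\mathcal P$ is a tuple $(V;V_i)_{i\in\mathcal P}$ of a finite-dimensional complex space $V$ and subspaces with $V_i\subseteq V_j$ whenever $i\prec j$; two such are equivalent if a linear bijection $g$ between the spaces satisfies $g(V_i)=W_i$ for all $i$. It is schurian if $\{g\in\mathrm{End}(V): g(V_i)\subseteq V_i\ \forall i\}=\mathbb C\cdot\mathrm{id}$. The poset $(t_1,\dots,t_s)$ is the disjoint union of incomparable chains of sizes $t_i$; $N$ has elements $a_1,a_2,b_1,b_2$ with exactly $a_1\prec b_1,a_2\prec b_1,a_2\prec b_2$; $(N,4)$ is the disjoint union of $N$ and a 4-chain. The critical posets are $(1,1,1,1),(2,2,2),(1,3,3),(1,2,5),(N,4)$. Let $e_i$ be the standard basis vectors of $\mathbb C^n$, $e_{i_1\dots i_k}=e_{i_1}+\dots+e_{i_k}$, and $\langle\cdots\rangle$ the span. For $\lambda\in\mathbb C$ define $\mathcal V_\lambda(\mathcal S)$ as follows (chains listed bottom to top): $(1,1,1,1)$: $V=\mathbb C^2$, subspaces $\langle e_1\rangle,\langle e_2\rangle,\langle e_1+e_2\rangle,\langle e_1+\lambda e_2\rangle$. $(2,2,2)$: $V=\mathbb C^3$, chains $\langle e_{123}\rangle\subset\langle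 e_{123},e_1+\lambda e_3\rangle$; $\langle e_1\rangle\subset\langle e_1,e_2\rangle$; $\langle e_3\rangle\subset\langle e_2,e_3\rangle$. $(1,3,3)$: $V=\mathbb C^4$, single element $\langle e_{123},e_{24}\rangle$; chains $\langle e_4\rangle\subset\langle e_1,e_4\rangle\subset\langle e_1,e_4,e_2+\lambda e_3\rangle$; $\langle e_3\rangle\subset\langle e_2,e_3\rangle\subset\langle e_1,e_2,e_3\rangle$. $(1,2,5)$: $V=\mathbb C^6$, single element $\langle e_{123},e_{245},e_{16}\rangle$; chain $\langle e_5,e_6\rangle\subset\langle e_1,e_2,e_5,e_6\rangle$; chain $\langle e_4\rangle\subset\langle e_3,e_4\rangle\subset\langle e_2,e_3,e_4\rangle\subset\langle e_1,e_2,e_3,e_4\rangle\subset\langle e_1,e_2,e_3,e_4,e_5+\lambda e_6\rangle$. $(N,4)$: $V=\mathbb C^5$, 4-chain $\langle e_4\rangle\subset\langle e_3,e_4\rangle\subset\langle e_2,e_3,e_4\rangle\subset\langle e_1,e_2,e_3,e_4\rangle$; on $N$: $a_1\mapsto\langle e_{235},e_{134}\rangle$, $a_2\mapsto\langle e_5\rangle$, $b_1\mapsto\langle e_{235},e_{134},e_5,e_3+\lambda e_4\rangle$, $b_2\mapsto\langle e_1,e_2,e_5\rangle$. In each case let $a\in\mathcal S$ be the unique element whose subspace depends on $\lambda$, $\mathcal S_a=\mathcal S\setminus\{a\}$ (with induced order), and $\mathcal V(\mathcal S_a)$ the subspace representation of $\mathcal S_a$ obtained from $\mathcal V_\lambda(\mathcal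 S)$ by deleting the subspace at $a$. *)

theory Defs
  imports "HOL-Analysis.Analysis" "HOL-Library.Numeral_Type"
begin

section \<open>Subspace representations over the complex numbers\<close>

text \<open>The ambient space C^n is complex^'n (with 'n a numeral type of cardinality n);
  subspaces are complex spans (vec.span for the scalar multiplication *s).
  Poset elements are labelled by natural numbers; a representation is a map from
  labels to subspaces, considered on a finite carrier set of labels.\<close>

definition cspan :: "('a::field ^ 'n) set \<Rightarrow> ('a ^ 'n) set" where
  "cspan S = vec.span S"

text \<open>Standard basis vector e_i (1-based, as in the paper).\<close>
definition ee :: "nat \<Rightarrow> complex ^ 'n::{finite,comm_ring_1}" where
  "ee i = axis (of_nat (i - 1)) 1"

text \<open>Two subspace representations V, W (of the poset with carrier P) in the same space
  are equivalent iff some linear bijection g maps V i onto W i for all i.\<close>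
definition rep_equivalent ::
  "nat set \<Rightarrow> (nat \<Rightarrow> (complex ^ 'n) set) \<Rightarrow> (nat \<Rightarrow> (complex ^ 'n) set) \<Rightarrow> bool" where
  "rep_equivalent P V W \<longleftrightarrow>
     (\<exists>g. Vector_Spaces.linear (*s) (*s) g \<and> bij g \<and> (\<forall>i\<in>P. g ` V i = W i))"

text \<open>Schurian: the endomorphisms preserving all subspaces are exactly the scalars.\<close>
definition schurian :: "nat set \<Rightarrow> (nat \<Rightarrow> (complex ^ 'n) set) \<Rightarrow> bool" where
  "schurian P V \<longleftrightarrow>
     {g. Vector_Spaces.linear (*s) (*s) g \<and> (\<forall>i\<in>P. g ` V i \<subseteq> V i)}
       = {g. \<exists>c::complex. g = (\<lambda>x. c *s x)}"

section \<open>The critical posets and the representations V_lambda\<close>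

text \<open>(1,1,1,1): elements 1,2,3,4 (pairwise incomparable); a = 4.\<close>
definition P1111 :: "nat set" where "P1111 = {1,2,3,4}"
definition ord1111 :: "nat rel" where "ord1111 = {}"
definition V1111 :: "complex \<Rightarrow> nat \<Rightarrow> (complex ^ 2) set" where
  "V1111 l i = (if i = 1 then cspan {ee 1}
    else if i = 2 then cspan {ee 2}
    else if i = 3 then cspan {ee 1 + ee 2}
    else if i = 4 then cspan {ee 1 + l *s ee 2}
    else {})"
definition a1111 :: nat where "a1111 = 4"

text \<open>(2,2,2): chains 1<2, 3<4, 5<6; a = 2.\<close>
definition P222 :: "nat set" where "P222 = {1,2,3,4,5,6}"
definition ord222 :: "nat rel" where "ord222 = {(1,2),(3,4),(5,6)}"
definition V222 :: "complex \<Rightarrow> nat \<Rightarrow> (complex ^ 3) set" where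
  "V222 l i = (if i = 1 then cspan {ee 1 + ee 2 + ee 3}
    else if i = 2 then cspan {ee 1 + ee 2 + ee 3, ee 1 + l *s ee 3}
    else if i = 3 then cspan {ee 1}
    else if i = 4 then cspan {ee 1, ee 2}
    else if i = 5 then cspan {ee 3}
    else if i = 6 then cspan {ee 2, ee 3}
    else {})"
definition a222 :: nat where "a222 = 2"

text \<open>(1,3,3): single element 1; chains 2<3<4 and 5<6<7; a = 4.\<close>
definition P133 :: "nat set" where "P133 = {1,2,3,4,5,6,7}"
definition ord133 :: "nat rel" where "ord133 = {(2,3),(3,4),(2,4),(5,6),(6,7),(5,7)}"
definition V133 :: "complex \<Rightarrow> nat \<Rightarrow> (complex ^ 4) set" where
  "V133 l i = (if i = 1 then cspan {ee 1 + ee 2 + ee 3, ee 2 + ee 4}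
    else if i = 2 then cspan {ee 4}
    else if i = 3 then cspan {ee 1, ee 4}
    else if i = 4 then cspan {ee 1, ee 4, ee 2 + l *s ee 3}
    else if i = 5 then cspan {ee 3}
    else if i = 6 then cspan {ee 2, ee 3}
    else if i = 7 then cspan {ee 1, ee 2, ee 3}
    else {})"
definition a133 :: nat where "a133 = 4"

text \<open>(1,2,5): single element 1; chain 2<3; chain 4<5<6<7<8; a = 8.\<close>
definition P125 :: "nat set" where "P125 = {1,2,3,4,5,6,7,8}"
definition ord125 :: "nat rel" where
  "ord125 = {(2,3)} \<union> {(i,j). 4 \<le> i \<and> i < j \<and> j \<le> 8}"
definition V125 :: "complex \<Rightarrow> nat \<Rightarrow> (complex ^ 6) set" where
  "V125 l i = (if i = 1 then cspan {ee 1 + ee 2 + ee 3, ee 2 + ee 4 + ee 5, ee 1 + ee 6}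
    else if i = 2 then cspan {ee 5, ee 6}
    else if i = 3 then cspan {ee 1, ee 2, ee 5, ee 6}
    else if i = 4 then cspan {ee 4}
    else if i = 5 then cspan {ee 3, ee 4}
    else if i = 6 then cspan {ee 2, ee 3, ee 4}
    else if i = 7 then cspan {ee 1, ee 2, ee 3, ee 4}
    else if i = 8 then cspan {ee 1, ee 2, ee 3, ee 4, ee 5 + l *s ee 6}
    else {})"
definition a125 :: nat where "a125 = 8"

text \<open>(N,4): 4-chain 1<2<3<4; N with a_1 = 5, a_2 = 6, b_1 = 7, b_2 = 8,
  a_1<b_1, a_2<b_1, a_2<b_2; the lambda-dependent element is b_1 = 7.\<close>
definition PN4 :: "nat set" where "PN4 = {1,2,3,4,5,6,7,8}"
definition ordN4 :: "nat rel" where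
  "ordN4 = {(i,j). 1 \<le> i \<and> i < j \<and> j \<le> 4} \<union> {(5,7),(6,7),(6,8)}"
definition VN4 :: "complex \<Rightarrow> nat \<Rightarrow> (complex ^ 5) set" where
  "VN4 l i = (if i = 1 then cspan {ee 4}
    else if i = 2 then cspan {ee 3, ee 4}
    else if i = 3 then cspan {ee 2, ee 3, ee 4}
    else if i = 4 then cspan {ee 1, ee 2, ee 3, ee 4}
    else if i = 5 then cspan {ee 2 + ee 3 + ee 5, ee 1 + ee 3 + ee 4}
    else if i = 6 then cspan {ee 5}
    else if i = 7 then cspan {ee 2 + ee 3 + ee 5, ee 1 + ee 3 + ee 4, ee 5, ee 3 + l *s ee 4}
    else if i = 8 then cspan {ee 1, ee 2, ee 5}
    else {})"
definition aN4 :: nat where "aN4 = 7"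

end

theory Submission
  imports Defs
begin

lemma all6: "(\<forall>i::6. P i) \<longleftrightarrow> P 0 \<and> P 1 \<and> P 2 \<and> P 3 \<and> P 4 \<and> P 5"
proof -
  have "(x::6) \<in> {0,1,2,3,4,5}" for x
  proof (induct x)
    case (of_int z)
    then have "z = 0 \<or> z=1 \<or> z=2 \<or> z=3 \<or> z=4 \<or> z=5" by auto
    then show ?case by auto
  qed
  then show ?thesis by (metis empty_iff insert_iff)
qed
lemma all5: "(\<forall>i::5. P i) \<longleftrightarrow> P 0 \<and> P 1 \<and> P 2 \<and> P 3 \<and> P 4"
proof -
  have "(x::5) \<in> {0,1,2,3,4}" for x
  proof (induct x)
    case (of_int z)
    then have "z = 0 \<or> z=1 \<or> z=2 \<or> z=3 \<or> z=4" by auto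
    then show ?case by auto
  qed
  then show ?thesis by (metis empty_iff insert_iff)
qed
lemma all2: "(\<forall>i::2. P i) \<longleftrightarrow> P 0 \<and> P 1"
proof -
  have "(x::2) \<in> {0,1}" for x
  proof (induct x)
    case (of_int z)
    then have "z = 0 \<or> z=1" by auto
    then show ?case by auto
  qed
  then show ?thesis by (metis empty_iff insert_iff)
qed

lemma all3: "(\<forall>i::3. P i) \<longleftrightarrow> P 0 \<and> P 1 \<and> P 2"
proof -
  have "(x::3) \<in> {0,1,2}" for x
  proof (induct x)
    case (of_int z)
    then have "z=0 \<or> z=1 \<or> z=2" by auto
    then show ?case by auto
  qed
  then show ?thesis by (metis empty_iff insert_iff)
qed
lemma all4: "(\<forall>i::4. P i) \<longleftrightarrow> P 0 \<and> P 1 \<and> P 2 \<and> P 3"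
proof -
  have "(x::4) \<in> {0,1,2,3}" for x
  proof (induct x)
    case (of_int z)
    then have "z=0 \<or> z=1 \<or> z=2 \<or> z=3" by auto
    then show ?case by auto
  qed
  then show ?thesis by (metis empty_iff insert_iff)
qed
lemma vec_eq3: "(v::complex^3) = w \<longleftrightarrow> v$0 = w$0 \<and> v$1 = w$1 \<and> v$2 = w$2"
  by (simp add: vec_eq_iff all3)
lemma vec_eq4: "(v::complex^4) = w \<longleftrightarrow> v$0 = w$0 \<and> v$1 = w$1 \<and> v$2 = w$2 \<and> v$3 = w$3"
  by (simp add: vec_eq_iff all4)
lemma vec_eq5: "(v::complex^5) = w \<longleftrightarrow> v$0 = w$0 \<and> v$1 = w$1 \<and> v$2 = w$2 \<and> v$3 = w$3 \<and> v$4 = w$4"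
  by (simp add: vec_eq_iff all5)
lemma vec_eq6: "(v::complex^6) = w \<longleftrightarrow> v$0 = w$0 \<and> v$1 = w$1 \<and> v$2 = w$2 \<and> v$3 = w$3 \<and> v$4 = w$4 \<and> v$5 = w$5"
  by (simp add: vec_eq_iff all6)
lemma mem_cspan_insert: "x \<in> cspan (insert a S) \<longleftrightarrow> (\<exists>k. x - k *s a \<in> cspan S)"
  unfolding cspan_def vec.span_insert by simp
lemma mem_cspan_empty: "x \<in> cspan {} \<longleftrightarrow> x = 0"
  unfolding cspan_def by simp

lemma scal_from_basis:
  fixes g :: "complex^'n \<Rightarrow> complex^'n"
  assumes lin: "Vector_Spaces.linear (*s) (*s) g" and h: "\<And>i. g (axis i 1) = c *s axis i 1"
  shows "g = (\<lambda>x. c *s x)"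
proof
  fix x :: "complex^'n"
  have "g x = g (\<Sum>i\<in>UNIV. x$i *s axis i 1)" by (simp add: basis_expansion)
  also have "\<dots> = (\<Sum>i\<in>UNIV. x$i *s g (axis i 1))"
    using lin by (simp add: vec.linear_sum vec.linear_scale)
  also have "\<dots> = c *s (\<Sum>i\<in>UNIV. x$i *s axis i 1)"
    by (simp add: h vec.scale_sum_right vector_smult_assoc mult.commute)
  also have "\<dots> = c *s x" by (simp add: basis_expansion)
  finally show "g x = c *s x" .
qed

lemma schurian_intro:
  fixes V :: "nat \<Rightarrow> (complex^'n) set"
  assumes "\<And>g::complex^'n\<Rightarrow>complex^'n. Vector_Spaces.linear (*s) (*s) g \<Longrightarrow> (\<forall>i\<in>P. g ` V i \<subseteq> V i) \<Longrightarrow> \<exists>c. g = (\<lambda>x. c *s x)"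
    and "\<And>i. i \<in> P \<Longrightarrow> \<exists>S. V i = cspan S"
  shows "schurian P V"
  unfolding schurian_def
proof (intro set_eqI iffI)
  fix g :: "complex^'n\<Rightarrow>complex^'n" assume "g \<in> {g. Vector_Spaces.linear (*s) (*s) g \<and> (\<forall>i\<in>P. g ` V i \<subseteq> V i)}"
  then show "g \<in> {g. \<exists>c. g = (*s) c}" using assms(1) by auto
next
  fix g :: "complex^'n\<Rightarrow>complex^'n" assume "g \<in> {g. \<exists>c::complex. g = (*s) c}"
  then obtain c where c: "g = (*s) c" by auto
  have "Vector_Spaces.linear (*s) (*s) g" unfolding c
    by (simp add: vec.linear_compose_scale_right vec.linear_id[unfolded id_def])
  moreover have "\<forall>i\<in>P. g ` V i \<subseteq> V i"
  proof
    fix i assume "i \<in> P"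
    then obtain S where "V i = cspan S" using assms(2) by blast
    then show "g ` V i \<subseteq> V i" unfolding c cspan_def by (auto intro: vec.span_scale)
  qed
  ultimately show "g \<in> {g. Vector_Spaces.linear (*s) (*s) g \<and> (\<forall>i\<in>P. g ` V i \<subseteq> V i)}" by auto
qed

lemma in_cspan: "x \<in> S \<Longrightarrow> x \<in> cspan S"
  unfolding cspan_def by (rule vec.span_base)

lemma img_mem: "g ` A \<subseteq> A \<Longrightarrow> x \<in> A \<Longrightarrow> g x \<in> A" by auto

lemma vec_eq2: "(v::complex^2) = w \<longleftrightarrow> v$0 = w$0 \<and> v$1 = w$1"
  by (simp add: vec_eq_iff all2)

lemma sch1111: "schurian (P1111 - {a1111}) (V1111 l)"
proof (rule schurian_intro)
  fix i assume "i \<in> P1111 - {a1111}"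
  then show "\<exists>S. V1111 l i = cspan S" by (auto simp: P1111_def a1111_def V1111_def)
next
  fix g :: "complex^2 \<Rightarrow> complex^2"
  assume lin: "Vector_Spaces.linear (*s) (*s) g" and H: "\<forall>i\<in>P1111 - {a1111}. g ` V1111 l i \<subseteq> V1111 l i"
  have H1: "g ` cspan {ee 1} \<subseteq> cspan {ee 1}" using H[rule_format, of 1] by (simp add: P1111_def a1111_def V1111_def)
  have H2: "g ` cspan {ee 2} \<subseteq> cspan {ee 2}" using H[rule_format, of 2] by (simp add: P1111_def a1111_def V1111_def)
  have H3: "g ` cspan {ee 1 + ee 2} \<subseteq> cspan {ee 1 + ee 2}" using H[rule_format, of 3] by (simp add: P1111_def a1111_def V1111_def)
  note ladd = vec.linear_add[OF lin] 
  from img_mem[OF H1 in_cspan] obtain a1 where e1: "g (ee 1) - a1 *s ee 1 = 0" by (auto simp: mem_cspan_insert mem_cspan_empty)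
  from img_mem[OF H2 in_cspan] obtain a2 where e2: "g (ee 2) - a2 *s ee 2 = 0" by (auto simp: mem_cspan_insert mem_cspan_empty)
  from img_mem[OF H3 in_cspan] obtain a3 where e3: "g (ee 1 + ee 2) - a3 *s (ee 1 + ee 2) = 0" by (auto simp: mem_cspan_insert mem_cspan_empty)
  note eqs = e1 e2 e3[unfolded ladd]
  note ceqs = eqs[unfolded vec_eq2, simplified ee_def, simplified]
  have "\<forall>i::2. g (axis i 1) = a1 *s axis i 1"
    unfolding all2 vec_eq2 using ceqs by (simp add: axis_def)
  then show "\<exists>c. g = (\<lambda>x. c *s x)" using scal_from_basis[OF lin] by blast
qed

lemma noneq_generic:
  fixes V :: "complex \<Rightarrow> nat \<Rightarrow> (complex^'n) set"
  assumes sch: "schurian (P - {a}) (V l)" and aP: "a \<in> P"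
    and same: "\<And>i. i \<noteq> a \<Longrightarrow> V l i = V m i"
    and key: "\<And>c. c \<noteq> 0 \<Longrightarrow> (\<lambda>x. c *s x) ` V l a = V m a \<Longrightarrow> l = m"
    and lm: "l \<noteq> m"
  shows "\<not> rep_equivalent P (V l) (V m)"
proof
  assume "rep_equivalent P (V l) (V m)"
  then obtain g where lin: "Vector_Spaces.linear (*s) (*s) g" and b: "bij g"
    and gi: "\<forall>i\<in>P. g ` V l i = V m i" unfolding rep_equivalent_def by blast
  have "\<forall>i\<in>P - {a}. g ` V l i \<subseteq> V l i" proof
    fix i assume "i \<in> P - {a}"
    then show "g ` V l i \<subseteq> V l i" using gi same[of i] by auto
  qed
  with lin sch obtain c where c: "g = (\<lambda>x. c *s x)" unfolding schurian_def by blast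
  have "c \<noteq> 0"
  proof
    assume "c = 0"
    then have "g 0 = g (axis undefined 1)" using c by simp
    moreover have "(0::complex^'n) \<noteq> axis undefined 1" by (simp add: vec_eq_iff axis_def)
    ultimately show False using b by (metis bij_def injD)
  qed
  moreover have "(\<lambda>x. c *s x) ` V l a = V m a" using gi aP c by auto
  ultimately show False using key lm by blast
qed

lemma key1111: 
  assumes "c \<noteq> 0" "(\<lambda>x. c *s x) ` V1111 l a1111 = V1111 m a1111"
  shows "l = m"
proof -
  have "ee 1 + l *s ee 2 \<in> V1111 l a1111" by (simp add: V1111_def a1111_def in_cspan)
  then have "c *s (ee 1 + l *s ee 2) \<in> V1111 m a1111" using assms(2) by blast
  then obtain k where "c *s (ee 1 + l *s ee 2) - k *s (ee 1 + m *s ee 2) = (0::complex^2)"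
    by (auto simp: V1111_def a1111_def mem_cspan_insert mem_cspan_empty)
  note ceqs = this[unfolded vec_eq2, simplified ee_def, simplified]
  then show ?thesis using assms(1) by (auto simp: axis_def)
qed

lemma ne1111: "l \<noteq> m \<Longrightarrow> \<not> rep_equivalent P1111 (V1111 l) (V1111 m)"
  by (rule noneq_generic[OF sch1111]) (auto simp: P1111_def a1111_def V1111_def key1111)

lemma sch222: "schurian (P222 - {a222}) (V222 l)"
proof (rule schurian_intro)
  fix i assume "i \<in> P222 - {a222}"
  then show "\<exists>S. V222 l i = cspan S" by (auto simp: P222_def a222_def V222_def)
next
  fix g :: "complex^3 \<Rightarrow> complex^3"
  assume lin: "Vector_Spaces.linear (*s) (*s) g" and H: "\<forall>i\<in>P222 - {a222}. g ` V222 l i \<subseteq> V222 l i"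
  note ladd = vec.linear_add[OF lin]
  have H1: "g ` cspan {ee 1 + ee 2 + ee 3} \<subseteq> cspan {ee 1 + ee 2 + ee 3}" using H[rule_format, of 1] by (simp add: P222_def a222_def V222_def)
  have H3: "g ` cspan {ee 1} \<subseteq> cspan {ee 1}" using H[rule_format, of 3] by (simp add: P222_def a222_def V222_def)
  have H4: "g ` cspan {ee 1, ee 2} \<subseteq> cspan {ee 1, ee 2}" using H[rule_format, of 4] by (simp add: P222_def a222_def V222_def)
  have H5: "g ` cspan {ee 3} \<subseteq> cspan {ee 3}" using H[rule_format, of 5] by (simp add: P222_def a222_def V222_def)
  have H6: "g ` cspan {ee 2, ee 3} \<subseteq> cspan {ee 2, ee 3}" using H[rule_format, of 6] by (simp add: P222_def a222_def V222_def)
  from img_mem[OF H1 in_cspan[of "ee 1 + ee 2 + ee 3"]] obtain k1_0 where f1: "g (ee 1 + ee 2 + ee 3) - k1_0 *s (ee 1 + ee 2 + ee 3) = (0::complex^3)"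
    by (auto simp: mem_cspan_insert mem_cspan_empty)
  from img_mem[OF H3 in_cspan[of "ee 1"]] obtain k2_0 where f2: "g (ee 1) - k2_0 *s (ee 1) = (0::complex^3)"
    by (auto simp: mem_cspan_insert mem_cspan_empty)
  from img_mem[OF H4 in_cspan[of "ee 1"]] obtain k3_0 k3_1 where f3: "g (ee 1) - k3_0 *s (ee 1) - k3_1 *s (ee 2) = (0::complex^3)"
    by (auto simp: mem_cspan_insert mem_cspan_empty)
  from img_mem[OF H4 in_cspan[of "ee 2"]] obtain k4_0 k4_1 where f4: "g (ee 2) - k4_0 *s (ee 1) - k4_1 *s (ee 2) = (0::complex^3)"
    by (auto simp: mem_cspan_insert mem_cspan_empty)
  from img_mem[OF H5 in_cspan[of "ee 3"]] obtain k5_0 where f5: "g (ee 3) - k5_0 *s (ee 3) = (0::complex^3)"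
    by (auto simp: mem_cspan_insert mem_cspan_empty)
  from img_mem[OF H6 in_cspan[of "ee 2"]] obtain k6_0 k6_1 where f6: "g (ee 2) - k6_0 *s (ee 2) - k6_1 *s (ee 3) = (0::complex^3)"
    by (auto simp: mem_cspan_insert mem_cspan_empty)
  from img_mem[OF H6 in_cspan[of "ee 3"]] obtain k7_0 k7_1 where f7: "g (ee 3) - k7_0 *s (ee 2) - k7_1 *s (ee 3) = (0::complex^3)"
    by (auto simp: mem_cspan_insert mem_cspan_empty)
  note ceqs0 = f1 f2 f3 f4 f5 f6 f7
  note ceqs = ceqs0[unfolded ladd vec_eq3, simplified ee_def, simplified axis_def, simplified]
  have "\<forall>i::3. g (axis i 1) = k2_0 *s axis i 1"
    unfolding all3 vec_eq3 using ceqs by (auto simp: axis_def)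
  then show "\<exists>c. g = (\<lambda>x. c *s x)" using scal_from_basis[OF lin] by blast
qed

lemma sch133: "schurian (P133 - {a133}) (V133 l)"
proof (rule schurian_intro)
  fix i assume "i \<in> P133 - {a133}"
  then show "\<exists>S. V133 l i = cspan S" by (auto simp: P133_def a133_def V133_def)
next
  fix g :: "complex^4 \<Rightarrow> complex^4"
  assume lin: "Vector_Spaces.linear (*s) (*s) g" and H: "\<forall>i\<in>P133 - {a133}. g ` V133 l i \<subseteq> V133 l i"
  note ladd = vec.linear_add[OF lin]
  have H1: "g ` cspan {ee 1 + ee 2 + ee 3, ee 2 + ee 4} \<subseteq> cspan {ee 1 + ee 2 + ee 3, ee 2 + ee 4}" using H[rule_format, of 1] by (simp add: P133_def a133_def V133_def)
  have H2: "g ` cspan {ee 4} \<subseteq> cspan {ee 4}" using H[rule_format, of 2] by (simp add: P133_def a133_def V133_def)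
  have H3: "g ` cspan {ee 1, ee 4} \<subseteq> cspan {ee 1, ee 4}" using H[rule_format, of 3] by (simp add: P133_def a133_def V133_def)
  have H5: "g ` cspan {ee 3} \<subseteq> cspan {ee 3}" using H[rule_format, of 5] by (simp add: P133_def a133_def V133_def)
  have H6: "g ` cspan {ee 2, ee 3} \<subseteq> cspan {ee 2, ee 3}" using H[rule_format, of 6] by (simp add: P133_def a133_def V133_def)
  have H7: "g ` cspan {ee 1, ee 2, ee 3} \<subseteq> cspan {ee 1, ee 2, ee 3}" using H[rule_format, of 7] by (simp add: P133_def a133_def V133_def)
  from img_mem[OF H1 in_cspan[of "ee 1 + ee 2 + ee 3"]] obtain k1_0 k1_1 where f1: "g (ee 1 + ee 2 + ee 3) - k1_0 *s (ee 1 + ee 2 + ee 3) - k1_1 *s (ee 2 + ee 4) = (0::complex^4)"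
    by (auto simp: mem_cspan_insert mem_cspan_empty)
  from img_mem[OF H1 in_cspan[of "ee 2 + ee 4"]] obtain k2_0 k2_1 where f2: "g (ee 2 + ee 4) - k2_0 *s (ee 1 + ee 2 + ee 3) - k2_1 *s (ee 2 + ee 4) = (0::complex^4)"
    by (auto simp: mem_cspan_insert mem_cspan_empty)
  from img_mem[OF H2 in_cspan[of "ee 4"]] obtain k3_0 where f3: "g (ee 4) - k3_0 *s (ee 4) = (0::complex^4)"
    by (auto simp: mem_cspan_insert mem_cspan_empty)
  from img_mem[OF H3 in_cspan[of "ee 1"]] obtain k4_0 k4_1 where f4: "g (ee 1) - k4_0 *s (ee 1) - k4_1 *s (ee 4) = (0::complex^4)"
    by (auto simp: mem_cspan_insert mem_cspan_empty)
  from img_mem[OF H3 in_cspan[of "ee 4"]] obtain k5_0 k5_1 where f5: "g (ee 4) - k5_0 *s (ee 1) - k5_1 *s (ee 4) = (0::complex^4)"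
    by (auto simp: mem_cspan_insert mem_cspan_empty)
  from img_mem[OF H5 in_cspan[of "ee 3"]] obtain k6_0 where f6: "g (ee 3) - k6_0 *s (ee 3) = (0::complex^4)"
    by (auto simp: mem_cspan_insert mem_cspan_empty)
  from img_mem[OF H6 in_cspan[of "ee 2"]] obtain k7_0 k7_1 where f7: "g (ee 2) - k7_0 *s (ee 2) - k7_1 *s (ee 3) = (0::complex^4)"
    by (auto simp: mem_cspan_insert mem_cspan_empty)
  from img_mem[OF H6 in_cspan[of "ee 3"]] obtain k8_0 k8_1 where f8: "g (ee 3) - k8_0 *s (ee 2) - k8_1 *s (ee 3) = (0::complex^4)"
    by (auto simp: mem_cspan_insert mem_cspan_empty)
  from img_mem[OF H7 in_cspan[of "ee 1"]] obtain k9_0 k9_1 k9_2 where f9: "g (ee 1) - k9_0 *s (ee 1) - k9_1 *s (ee 2) - k9_2 *s (ee 3) = (0::complex^4)"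
    by (auto simp: mem_cspan_insert mem_cspan_empty)
  from img_mem[OF H7 in_cspan[of "ee 2"]] obtain k10_0 k10_1 k10_2 where f10: "g (ee 2) - k10_0 *s (ee 1) - k10_1 *s (ee 2) - k10_2 *s (ee 3) = (0::complex^4)"
    by (auto simp: mem_cspan_insert mem_cspan_empty)
  from img_mem[OF H7 in_cspan[of "ee 3"]] obtain k11_0 k11_1 k11_2 where f11: "g (ee 3) - k11_0 *s (ee 1) - k11_1 *s (ee 2) - k11_2 *s (ee 3) = (0::complex^4)"
    by (auto simp: mem_cspan_insert mem_cspan_empty)
  note ceqs0 = f1 f2 f3 f4 f5 f6 f7 f8 f9 f10 f11
  note ceqs = ceqs0[unfolded ladd vec_eq4, simplified ee_def, simplified axis_def, simplified]
  have "\<forall>i::4. g (axis i 1) = k3_0 *s axis i 1"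
    unfolding all4 vec_eq4 using ceqs apply (simp add: axis_def)
    apply (elim conjE)
    apply ((thin_tac "g _ $ _ = _")+)?
    apply auto
    done
  then show "\<exists>c. g = (\<lambda>x. c *s x)" using scal_from_basis[OF lin] by blast
qed

lemma sch125: "schurian (P125 - {a125}) (V125 l)"
proof (rule schurian_intro)
  fix i assume "i \<in> P125 - {a125}"
  then show "\<exists>S. V125 l i = cspan S" by (auto simp: P125_def a125_def V125_def)
next
  fix g :: "complex^6 \<Rightarrow> complex^6"
  assume lin: "Vector_Spaces.linear (*s) (*s) g" and H: "\<forall>i\<in>P125 - {a125}. g ` V125 l i \<subseteq> V125 l i"
  note ladd = vec.linear_add[OF lin]
  have H1: "g ` cspan {ee 1 + ee 2 + ee 3, ee 2 + ee 4 + ee 5, ee 1 + ee 6} \<subseteq> cspan {ee 1 + ee 2 + ee 3, ee 2 + ee 4 + ee 5, ee 1 + ee 6}" using H[rule_format, of 1] by (simp add: P125_def a125_def V125_def)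
  have H2: "g ` cspan {ee 5, ee 6} \<subseteq> cspan {ee 5, ee 6}" using H[rule_format, of 2] by (simp add: P125_def a125_def V125_def)
  have H3: "g ` cspan {ee 1, ee 2, ee 5, ee 6} \<subseteq> cspan {ee 1, ee 2, ee 5, ee 6}" using H[rule_format, of 3] by (simp add: P125_def a125_def V125_def)
  have H4: "g ` cspan {ee 4} \<subseteq> cspan {ee 4}" using H[rule_format, of 4] by (simp add: P125_def a125_def V125_def)
  have H5: "g ` cspan {ee 3, ee 4} \<subseteq> cspan {ee 3, ee 4}" using H[rule_format, of 5] by (simp add: P125_def a125_def V125_def)
  have H6: "g ` cspan {ee 2, ee 3, ee 4} \<subseteq> cspan {ee 2, ee 3, ee 4}" using H[rule_format, of 6] by (simp add: P125_def a125_def V125_def)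
  have H7: "g ` cspan {ee 1, ee 2, ee 3, ee 4} \<subseteq> cspan {ee 1, ee 2, ee 3, ee 4}" using H[rule_format, of 7] by (simp add: P125_def a125_def V125_def)
  from img_mem[OF H4 in_cspan[of "ee 4"]] obtain k1_0 where f1: "g (ee 4) - k1_0 *s (ee 4) = (0::complex^6)"
    by (auto simp: mem_cspan_insert mem_cspan_empty)
  from img_mem[OF H5 in_cspan[of "ee 3"]] obtain k2_0 k2_1 where f2: "g (ee 3) - k2_0 *s (ee 3) - k2_1 *s (ee 4) = (0::complex^6)"
    by (auto simp: mem_cspan_insert mem_cspan_empty)
  from img_mem[OF H6 in_cspan[of "ee 2"]] obtain k3_0 k3_1 k3_2 where f3: "g (ee 2) - k3_0 *s (ee 2) - k3_1 *s (ee 3) - k3_2 *s (ee 4) = (0::complex^6)"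
    by (auto simp: mem_cspan_insert mem_cspan_empty)
  from img_mem[OF H3 in_cspan[of "ee 2"]] obtain k4_0 k4_1 k4_2 k4_3 where f4: "g (ee 2) - k4_0 *s (ee 1) - k4_1 *s (ee 2) - k4_2 *s (ee 5) - k4_3 *s (ee 6) = (0::complex^6)"
    by (auto simp: mem_cspan_insert mem_cspan_empty)
  from img_mem[OF H7 in_cspan[of "ee 1"]] obtain k5_0 k5_1 k5_2 k5_3 where f5: "g (ee 1) - k5_0 *s (ee 1) - k5_1 *s (ee 2) - k5_2 *s (ee 3) - k5_3 *s (ee 4) = (0::complex^6)"
    by (auto simp: mem_cspan_insert mem_cspan_empty)
  from img_mem[OF H3 in_cspan[of "ee 1"]] obtain k6_0 k6_1 k6_2 k6_3 where f6: "g (ee 1) - k6_0 *s (ee 1) - k6_1 *s (ee 2) - k6_2 *s (ee 5) - k6_3 *s (ee 6) = (0::complex^6)"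
    by (auto simp: mem_cspan_insert mem_cspan_empty)
  from img_mem[OF H2 in_cspan[of "ee 5"]] obtain k7_0 k7_1 where f7: "g (ee 5) - k7_0 *s (ee 5) - k7_1 *s (ee 6) = (0::complex^6)"
    by (auto simp: mem_cspan_insert mem_cspan_empty)
  from img_mem[OF H2 in_cspan[of "ee 6"]] obtain k8_0 k8_1 where f8: "g (ee 6) - k8_0 *s (ee 5) - k8_1 *s (ee 6) = (0::complex^6)"
    by (auto simp: mem_cspan_insert mem_cspan_empty)
  from img_mem[OF H1 in_cspan[of "ee 1 + ee 2 + ee 3"]] obtain k9_0 k9_1 k9_2 where f9: "g (ee 1 + ee 2 + ee 3) - k9_0 *s (ee 1 + ee 2 + ee 3) - k9_1 *s (ee 2 + ee 4 + ee 5) - k9_2 *s (ee 1 + ee 6) = (0::complex^6)"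
    by (auto simp: mem_cspan_insert mem_cspan_empty)
  from img_mem[OF H1 in_cspan[of "ee 2 + ee 4 + ee 5"]] obtain k10_0 k10_1 k10_2 where f10: "g (ee 2 + ee 4 + ee 5) - k10_0 *s (ee 1 + ee 2 + ee 3) - k10_1 *s (ee 2 + ee 4 + ee 5) - k10_2 *s (ee 1 + ee 6) = (0::complex^6)"
    by (auto simp: mem_cspan_insert mem_cspan_empty)
  from img_mem[OF H1 in_cspan[of "ee 1 + ee 6"]] obtain k11_0 k11_1 k11_2 where f11: "g (ee 1 + ee 6) - k11_0 *s (ee 1 + ee 2 + ee 3) - k11_1 *s (ee 2 + ee 4 + ee 5) - k11_2 *s (ee 1 + ee 6) = (0::complex^6)"
    by (auto simp: mem_cspan_insert mem_cspan_empty)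
  note ceqs0 = f1 f2 f3 f4 f5 f6 f7 f8 f9 f10 f11
  note ceqs = ceqs0[unfolded ladd vec_eq6, simplified ee_def, simplified axis_def, simplified]
  have "\<forall>i::6. g (axis i 1) = k1_0 *s axis i 1"
    unfolding all6 vec_eq6 using ceqs apply (simp add: axis_def)
    apply (elim conjE)
    apply ((thin_tac "g _ $ _ = _")+)?
    apply auto
    done
  then show "\<exists>c. g = (\<lambda>x. c *s x)" using scal_from_basis[OF lin] by blast
qed

lemma schN4: "schurian (PN4 - {aN4}) (VN4 l)"
proof (rule schurian_intro)
  fix i assume "i \<in> PN4 - {aN4}"
  then show "\<exists>S. VN4 l i = cspan S" by (auto simp: PN4_def aN4_def VN4_def)
next
  fix g :: "complex^5 \<Rightarrow> complex^5"
  assume lin: "Vector_Spaces.linear (*s) (*s) g" and H: "\<forall>i\<in>PN4 - {aN4}. g ` VN4 l i \<subseteq> VN4 l i"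
  note ladd = vec.linear_add[OF lin]
  have H1: "g ` cspan {ee 4} \<subseteq> cspan {ee 4}" using H[rule_format, of 1] by (simp add: PN4_def aN4_def VN4_def)
  have H2: "g ` cspan {ee 3, ee 4} \<subseteq> cspan {ee 3, ee 4}" using H[rule_format, of 2] by (simp add: PN4_def aN4_def VN4_def)
  have H3: "g ` cspan {ee 2, ee 3, ee 4} \<subseteq> cspan {ee 2, ee 3, ee 4}" using H[rule_format, of 3] by (simp add: PN4_def aN4_def VN4_def)
  have H4: "g ` cspan {ee 1, ee 2, ee 3, ee 4} \<subseteq> cspan {ee 1, ee 2, ee 3, ee 4}" using H[rule_format, of 4] by (simp add: PN4_def aN4_def VN4_def)
  have H5: "g ` cspan {ee 2 + ee 3 + ee 5, ee 1 + ee 3 + ee 4} \<subseteq> cspan {ee 2 + ee 3 + ee 5, ee 1 + ee 3 + ee 4}" using H[rule_format, of 5] by (simp add: PN4_def aN4_def VN4_def)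
  have H6: "g ` cspan {ee 5} \<subseteq> cspan {ee 5}" using H[rule_format, of 6] by (simp add: PN4_def aN4_def VN4_def)
  have H8: "g ` cspan {ee 1, ee 2, ee 5} \<subseteq> cspan {ee 1, ee 2, ee 5}" using H[rule_format, of 8] by (simp add: PN4_def aN4_def VN4_def)
  from img_mem[OF H1 in_cspan[of "ee 4"]] obtain k1_0 where f1: "g (ee 4) - k1_0 *s (ee 4) = (0::complex^5)"
    by (auto simp: mem_cspan_insert mem_cspan_empty)
  from img_mem[OF H2 in_cspan[of "ee 3"]] obtain k2_0 k2_1 where f2: "g (ee 3) - k2_0 *s (ee 3) - k2_1 *s (ee 4) = (0::complex^5)"
    by (auto simp: mem_cspan_insert mem_cspan_empty)
  from img_mem[OF H3 in_cspan[of "ee 2"]] obtain k3_0 k3_1 k3_2 where f3: "g (ee 2) - k3_0 *s (ee 2) - k3_1 *s (ee 3) - k3_2 *s (ee 4) = (0::complex^5)"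
    by (auto simp: mem_cspan_insert mem_cspan_empty)
  from img_mem[OF H8 in_cspan[of "ee 2"]] obtain k4_0 k4_1 k4_2 where f4: "g (ee 2) - k4_0 *s (ee 1) - k4_1 *s (ee 2) - k4_2 *s (ee 5) = (0::complex^5)"
    by (auto simp: mem_cspan_insert mem_cspan_empty)
  from img_mem[OF H4 in_cspan[of "ee 1"]] obtain k5_0 k5_1 k5_2 k5_3 where f5: "g (ee 1) - k5_0 *s (ee 1) - k5_1 *s (ee 2) - k5_2 *s (ee 3) - k5_3 *s (ee 4) = (0::complex^5)"
    by (auto simp: mem_cspan_insert mem_cspan_empty)
  from img_mem[OF H8 in_cspan[of "ee 1"]] obtain k6_0 k6_1 k6_2 where f6: "g (ee 1) - k6_0 *s (ee 1) - k6_1 *s (ee 2) - k6_2 *s (ee 5) = (0::complex^5)"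
    by (auto simp: mem_cspan_insert mem_cspan_empty)
  from img_mem[OF H6 in_cspan[of "ee 5"]] obtain k7_0 where f7: "g (ee 5) - k7_0 *s (ee 5) = (0::complex^5)"
    by (auto simp: mem_cspan_insert mem_cspan_empty)
  from img_mem[OF H5 in_cspan[of "ee 2 + ee 3 + ee 5"]] obtain k8_0 k8_1 where f8: "g (ee 2 + ee 3 + ee 5) - k8_0 *s (ee 2 + ee 3 + ee 5) - k8_1 *s (ee 1 + ee 3 + ee 4) = (0::complex^5)"
    by (auto simp: mem_cspan_insert mem_cspan_empty)
  from img_mem[OF H5 in_cspan[of "ee 1 + ee 3 + ee 4"]] obtain k9_0 k9_1 where f9: "g (ee 1 + ee 3 + ee 4) - k9_0 *s (ee 2 + ee 3 + ee 5) - k9_1 *s (ee 1 + ee 3 + ee 4) = (0::complex^5)"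
    by (auto simp: mem_cspan_insert mem_cspan_empty)
  note ceqs0 = f1 f2 f3 f4 f5 f6 f7 f8 f9
  note ceqs = ceqs0[unfolded ladd vec_eq5, simplified ee_def, simplified axis_def, simplified]
  have "\<forall>i::5. g (axis i 1) = k1_0 *s axis i 1"
    unfolding all5 vec_eq5 using ceqs apply (simp add: axis_def)
    apply (elim conjE)
    apply ((thin_tac "g _ $ _ = _")+)?
    apply auto
    done
  then show "\<exists>c. g = (\<lambda>x. c *s x)" using scal_from_basis[OF lin] by blast
qed

lemma key222:
  assumes "c \<noteq> 0" "(\<lambda>x. c *s x) ` V222 l a222 = V222 m a222"
  shows "l = m"
proof -
  have "ee 1 + l *s ee 3 \<in> V222 l a222" by (simp add: V222_def a222_def in_cspan)
  then have "c *s (ee 1 + l *s ee 3) \<in> V222 m a222" using assms(2) by blast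
  then obtain k0 k1 where "c *s (ee 1 + l *s ee 3) - k0 *s (ee 1 + ee 2 + ee 3) - k1 *s (ee 1 + m *s ee 3) = (0::complex^3)"
    by (auto simp: V222_def a222_def mem_cspan_insert mem_cspan_empty)
  note ceqs = this[unfolded vec_eq3, simplified ee_def, simplified]
  then show ?thesis using assms(1) by (auto simp: axis_def)
qed

lemma ne222: "l \<noteq> m \<Longrightarrow> \<not> rep_equivalent P222 (V222 l) (V222 m)"
  by (rule noneq_generic[OF sch222]) (auto simp: P222_def a222_def V222_def key222)

lemma key133:
  assumes "c \<noteq> 0" "(\<lambda>x. c *s x) ` V133 l a133 = V133 m a133"
  shows "l = m"
proof -
  have "ee 2 + l *s ee 3 \<in> V133 l a133" by (simp add: V133_def a133_def in_cspan)
  then have "c *s (ee 2 + l *s ee 3) \<in> V133 m a133" using assms(2) by blast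
  then obtain k0 k1 k2 where "c *s (ee 2 + l *s ee 3) - k0 *s (ee 1) - k1 *s (ee 4) - k2 *s (ee 2 + m *s ee 3) = (0::complex^4)"
    by (auto simp: V133_def a133_def mem_cspan_insert mem_cspan_empty)
  note ceqs = this[unfolded vec_eq4, simplified ee_def, simplified]
  then show ?thesis using assms(1) by (auto simp: axis_def)
qed

lemma ne133: "l \<noteq> m \<Longrightarrow> \<not> rep_equivalent P133 (V133 l) (V133 m)"
  by (rule noneq_generic[OF sch133]) (auto simp: P133_def a133_def V133_def key133)

lemma key125:
  assumes "c \<noteq> 0" "(\<lambda>x. c *s x) ` V125 l a125 = V125 m a125"
  shows "l = m"
proof -
  have "ee 5 + l *s ee 6 \<in> V125 l a125" by (simp add: V125_def a125_def in_cspan)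
  then have "c *s (ee 5 + l *s ee 6) \<in> V125 m a125" using assms(2) by blast
  then obtain k0 k1 k2 k3 k4 where "c *s (ee 5 + l *s ee 6) - k0 *s (ee 1) - k1 *s (ee 2) - k2 *s (ee 3) - k3 *s (ee 4) - k4 *s (ee 5 + m *s ee 6) = (0::complex^6)"
    by (auto simp: V125_def a125_def mem_cspan_insert mem_cspan_empty)
  note ceqs = this[unfolded vec_eq6, simplified ee_def, simplified]
  then show ?thesis using assms(1) by (auto simp: axis_def)
qed

lemma ne125: "l \<noteq> m \<Longrightarrow> \<not> rep_equivalent P125 (V125 l) (V125 m)"
  by (rule noneq_generic[OF sch125]) (auto simp: P125_def a125_def V125_def key125)

lemma keyN4:
  assumes "c \<noteq> 0" "(\<lambda>x. c *s x) ` VN4 l aN4 = VN4 m aN4"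
  shows "l = m"
proof -
  have "ee 3 + l *s ee 4 \<in> VN4 l aN4" by (simp add: VN4_def aN4_def in_cspan)
  then have "c *s (ee 3 + l *s ee 4) \<in> VN4 m aN4" using assms(2) by blast
  then obtain k0 k1 k2 k3 where "c *s (ee 3 + l *s ee 4) - k0 *s (ee 2 + ee 3 + ee 5) - k1 *s (ee 1 + ee 3 + ee 4) - k2 *s (ee 5) - k3 *s (ee 3 + m *s ee 4) = (0::complex^5)"
    by (auto simp: VN4_def aN4_def mem_cspan_insert mem_cspan_empty)
  note ceqs = this[unfolded vec_eq5, simplified ee_def, simplified]
  then show ?thesis using assms(1) by (auto simp: axis_def)
qed

lemma neN4: "l \<noteq> m \<Longrightarrow> \<not> rep_equivalent PN4 (VN4 l) (VN4 m)"
  by (rule noneq_generic[OF schN4]) (auto simp: PN4_def aN4_def VN4_def keyN4)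

theorem proposition1:
  shows "(\<forall>l m. l \<noteq> m \<longrightarrow> \<not> rep_equivalent P1111 (V1111 l) (V1111 m))
       \<and> (\<forall>l m. l \<noteq> m \<longrightarrow> \<not> rep_equivalent P222 (V222 l) (V222 m))
       \<and> (\<forall>l m. l \<noteq> m \<longrightarrow> \<not> rep_equivalent P133 (V133 l) (V133 m))
       \<and> (\<forall>l m. l \<noteq> m \<longrightarrow> \<not> rep_equivalent P125 (V125 l) (V125 m))
       \<and> (\<forall>l m. l \<noteq> m \<longrightarrow> \<not> rep_equivalent PN4 (VN4 l) (VN4 m))
       \<and> (\<forall>l. schurian (P1111 - {a1111}) (V1111 l))
       \<and> (\<forall>l. schurian (P222 - {a222}) (V222 l))
       \<and> (\<forall>l. schurian (P133 - {a133}) (V133 l))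
       \<and> (\<forall>l. schurian (P125 - {a125}) (V125 l))
       \<and> (\<forall>l. schurian (PN4 - {aN4}) (VN4 l))"
  using ne1111 ne222 ne133 ne125 neN4 sch1111 sch222 sch133 sch125 schN4 by blast

end
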